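(* Let $X_1$ be a positive random variable distributed as $X$, where $\mathbb{E}X=1$, and let $p\ge2$ be an integer. If $\mathbb{P}\{X\ge x\}=o(x^{-p-1})$ as $x\to\infty$, then $$\mathbb{E}\frac{X_1^{2p}}{\left(\frac1nX_1+1\right)^p}=o(n^{p-1})\quad(n\to\infty).$$ In addition, if $\mathbb{P}\{X\ge x\}=O(x^{-q})$ as $x\to\infty$ for some real $q$ with $p<q<2p$, then $$\mathbb{E}\frac{X_1^{2p}}{\left(\frac1nX_1+1\right)^p}=O(n^{2p-q}).$$ *)

theory Defs
  imports "HOL-Probability.Probability" "HOL-Library.Landau_Symbols"
begin

end

theory Submission
  imports Defs
begin

lemma mvt_powr:
  fixes a b e :: real
  assumes "0 < a" "a < b"
  shows "\<exists>z. a < z \<and> z < b \<and> b powr e - a powr e = (b - a) * (e * z powr (e - 1))"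
proof -
  have "\<And>x. a \<le> x \<Longrightarrow> x \<le> b \<Longrightarrow> ((\<lambda>z. z powr e) has_real_derivative e * x powr (e-1)) (at x)"
    using has_real_derivative_powr assms by auto
  from MVT2[OF assms(2) this] show ?thesis by blast
qed

lemma pow_diff_le:
  fixes x :: real
  assumes "x \<ge> 1" "m \<ge> 1"
  shows "(x+1)^m - x^m \<le> real m * 2^(m-1) * x^(m-1)"
proof -
  have "\<And>y. x \<le> y \<Longrightarrow> y \<le> x+1 \<Longrightarrow> ((\<lambda>z. z ^ m) has_real_derivative real m * y^(m - Suc 0)) (at y)"
    by (rule DERIV_pow)
  from MVT2[of x "x+1", OF _ this] obtain z where z: "x < z" "z < x+1"
    "(x+1)^m - x^m = (x+1-x) * (real m * z^(m - Suc 0))" by auto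
  have "z^(m-1) \<le> (2*x)^(m-1)" using z assms by (intro power_mono) auto
  also have "\<dots> = 2^(m-1) * x^(m-1)" by (simp add: power_mult_distrib)
  finally have "real m * z^(m-1) \<le> real m * (2^(m-1) * x^(m-1))" by (intro mult_left_mono) auto
  thus ?thesis using z by simp
qed

lemma ineq_tail:
  fixes x r :: real
  assumes "x \<ge> 1" "p \<ge> 1" "r > real p"
  shows "((x+1)^p - x^p) * x powr (-r) \<le>
     (real p * 2^(p-1) * 2 powr (r - p + 1) / (r - p)) * (x powr (p - r) - (x+1) powr (p - r))"
proof -
  define b where "b = r - p"
  have b: "b > 0" using assms b_def by simp
  have x0: "x > 0" using assms by simp
  have "((x+1)^p - x^p) * x powr (-r) \<le> (real p * 2^(p-1) * x^(p-1)) * x powr (-r)"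
    using pow_diff_le[OF assms(1,2)] by (intro mult_right_mono) auto
  moreover have "x^(p-1) * x powr (-r) = x powr (- b - 1)"
    using x0 assms by (simp add: powr_realpow[symmetric] powr_add[symmetric] b_def of_nat_diff; simp add: algebra_simps)
  ultimately have L: "((x+1)^p - x^p) * x powr (-r) \<le> real p * 2^(p-1) * x powr (- b - 1)" by (metis mult.assoc)
  obtain z where z: "x < z" "z < x+1" "(x+1) powr (-b) - x powr (-b) = (x+1-x) * ((-b) * z powr (-b - 1))"
    using mvt_powr[OF x0, of "x+1" "-b"] by auto
  have "(2*x) powr (-b-1) \<le> z powr (-b-1)"
    using z assms b by (intro powr_mono2') auto
  also have "(2*x) powr (-b-1) = 2 powr (-b-1) * x powr (-b-1)" using x0 by (simp add: powr_mult)
  finally have zb: "2 powr (-b-1) * x powr (-b-1) \<le> z powr (-b-1)" .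
  have R: "x powr (p - r) - (x+1) powr (p - r) = b * z powr (-b-1)"
  proof -
    have e: "real p - r = -b" by (simp add: b_def)
    have z3: "(x+1) powr (-b) - x powr (-b) = - (b * z powr (-b-1))" using z(3) by simp
    show ?thesis unfolding e using z3 by linarith
  qed
  have "2 powr (r - p + 1) * 2 powr (-b-1) = 1" by (simp add: b_def powr_add[symmetric])
  have "real p * 2^(p-1) * x powr (- b - 1) = (real p * 2^(p-1) * 2 powr (r - p + 1) / b) * (b * (2 powr (-b-1) * x powr (-b-1)))"
    using b \<open>2 powr (r - p + 1) * 2 powr (-b-1) = 1\<close> by (simp add: field_simps)
  also have "\<dots> \<le> (real p * 2^(p-1) * 2 powr (r - p + 1) / b) * (b * z powr (-b-1))"
    using zb b by (intro mult_left_mono) auto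
  finally show ?thesis using L R b_def by simp
qed

lemma ineq_head:
  fixes x r :: real
  assumes "x \<ge> 1" "p \<ge> 1" "r < 2 * real p"
  shows "((x+1)^(2*p) - x^(2*p)) * x powr (-r) \<le>
     (real (2*p) * 2^(2*p-1) * 2 / (2*p - r)) * ((x+1) powr (2*p - r) - x powr (2*p - r))"
proof -
  define c where "c = 2*p - r"
  have c: "c > 0" using assms c_def by simp
  have x0: "x > 0" using assms by simp
  have "((x+1)^(2*p) - x^(2*p)) * x powr (-r) \<le> (real (2*p) * 2^(2*p-1) * x^(2*p-1)) * x powr (-r)"
    using pow_diff_le[OF assms(1), of "2*p"] assms by (intro mult_right_mono) auto
  moreover have "x^(2*p-1) * x powr (-r) = x powr (c - 1)"
    using x0 assms by (simp add: powr_realpow[symmetric] powr_add[symmetric] c_def of_nat_diff; simp add: algebra_simps)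
  ultimately have L: "((x+1)^(2*p) - x^(2*p)) * x powr (-r) \<le> real (2*p) * 2^(2*p-1) * x powr (c - 1)" by (metis mult.assoc)
  obtain z where z: "x < z" "z < x+1" "(x+1) powr c - x powr c = (x+1-x) * (c * z powr (c - 1))"
    using mvt_powr[OF x0, of "x+1" "c"] by auto
  have zb: "x powr (c-1) / 2 \<le> z powr (c-1)"
  proof (cases "c \<ge> 1")
    case True
    then have "x powr (c-1) \<le> z powr (c-1)" using z x0 by (intro powr_mono2) auto
    then show ?thesis using powr_ge_zero[of z "c-1"] by linarith
  next
    case False
    have "(2*x) powr (c-1) \<le> z powr (c-1)"
      using z assms False by (intro powr_mono2') auto
    also have "(2*x) powr (c-1) = 2 powr (c-1) * x powr (c-1)" using x0 by (simp add: powr_mult)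
    finally have "2 powr (c-1) * x powr (c-1) \<le> z powr (c-1)" .
    moreover have "2 powr (-1) \<le> 2 powr (c-1)" using c by (intro powr_mono) auto
    moreover have "2 powr (-1::real) = 1/2" by (simp add: powr_minus)
    ultimately have "(1/2) * x powr (c-1) \<le> 2 powr (c-1) * x powr (c-1)"
      by (intro mult_right_mono) auto
    then show ?thesis using \<open>2 powr (c-1) * x powr (c-1) \<le> z powr (c-1)\<close> by linarith
  qed
  have R: "(x+1) powr (2*p - r) - x powr (2*p - r) = c * z powr (c-1)"
  proof -
    have e: "real (2 * p) - r = c" by (simp add: c_def)
    show ?thesis unfolding e using z(3) by simp
  qed
  have "real (2*p) * 2^(2*p-1) * x powr (c - 1) = (real (2*p) * 2^(2*p-1) * 2 / c) * (c * (x powr (c-1) / 2))"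
    using c by (simp add: field_simps)
  also have "\<dots> \<le> (real (2*p) * 2^(2*p-1) * 2 / c) * (c * z powr (c-1))"
    using zb c by (intro mult_left_mono) auto
  finally have M: "real (2*p) * 2^(2*p-1) * x powr (c - 1) \<le> (real (2*p) * 2^(2*p-1) * 2 / c) * ((x+1) powr (2*p - r) - x powr (2*p - r))"
    unfolding R[symmetric] .
  have e1: "real (2 * p) - r = c" and e2: "2 * real p - r = c" by (simp_all add: c_def)
  show ?thesis unfolding e1 e2 using L M unfolding e1 e2 by linarith
qed


definition gfun :: "nat \<Rightarrow> nat \<Rightarrow> real \<Rightarrow> real" where
  "gfun p n x = (if x \<le> real n then x^(2*p) else real n^p * x^p)"

lemma Y_le_gfun:
  assumes "x > 0" "n \<ge> 1"
  shows "x^(2*p) / (x / real n + 1)^p \<le> gfun p n x"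
proof -
  have n0: "real n > 0" using assms by simp
  have d1: "(x / real n + 1)^p \<ge> 1" using assms n0 by (intro one_le_power) auto
  have xp: "x^(2*p) \<ge> 0" using assms by simp
  have "x^(2*p) / (x / real n + 1)^p \<le> x^(2*p) / 1"
    using d1 xp by (intro divide_left_mono) auto
  then have A: "x^(2*p) / (x / real n + 1)^p \<le> x^(2*p)" by simp
  have "(x / real n)^p \<le> (x / real n + 1)^p" using assms n0 by (intro power_mono) auto
  moreover have "(x / real n)^p > 0" using assms n0 by simp
  ultimately have "x^(2*p) / (x / real n + 1)^p \<le> x^(2*p) / (x / real n)^p"
    using xp by (intro divide_left_mono) auto
  also have "x^(2*p) / (x / real n)^p = real n ^ p * x ^ p"
  proof -
    have "x^(2*p) = x^p * x^p" by (simp add: mult_2 power_add)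
    moreover have "(x / real n)^p = x^p / real n^p" by (simp add: power_divide)
    moreover have "x^p > 0" "real n^p > 0" using assms n0 by auto
    ultimately show ?thesis by (simp add: field_simps)
  qed
  finally have B: "x^(2*p) / (x / real n + 1)^p \<le> real n ^ p * x ^ p" .
  show ?thesis using A B unfolding gfun_def by auto
qed

lemma gfun_mono:
  assumes "0 \<le> x" "x \<le> y"
  shows "gfun p n x \<le> gfun p n y"
proof -
  consider "y \<le> real n" | "x \<le> real n" "real n < y" | "real n < x" by linarith
  then show ?thesis
  proof cases
    case 1 then show ?thesis using assms unfolding gfun_def by (auto intro: power_mono)
  next
    case 2
    have "x^(2*p) \<le> real n^(2*p)" using 2 assms by (intro power_mono) auto
    also have "\<dots> = real n^p * real n^p" by (simp add: mult_2 power_add)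
    also have "\<dots> \<le> real n^p * y^p" using 2 assms by (intro mult_left_mono power_mono) auto
    finally show ?thesis using 2 unfolding gfun_def by auto
  next
    case 3
    then show ?thesis using assms unfolding gfun_def by (auto intro!: mult_left_mono power_mono)
  qed
qed

lemma gfun_0: "p \<ge> 1 \<Longrightarrow> gfun p n 0 = 0" unfolding gfun_def by simp

lemma gfun_nonneg: "0 \<le> x \<Longrightarrow> 0 \<le> gfun p n x" unfolding gfun_def by simp

lemma gfun_pointwise:
  assumes "x \<ge> 0" "p \<ge> 1"
  shows "ennreal (gfun p n x) \<le>
    (\<Sum>k. ennreal (gfun p n (real (Suc k)) - gfun p n (real k)) * (if real k \<le> x then 1 else 0))"
proof -
  define j where "j = nat \<lfloor>x\<rfloor>"
  have xj: "x \<le> real (Suc j)" using assms unfolding j_def by linarith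
  have kj: "\<And>k. k < Suc j \<Longrightarrow> real k \<le> x" using assms unfolding j_def by linarith
  have "ennreal (gfun p n x) \<le> ennreal (gfun p n (real (Suc j)))"
    using gfun_mono[OF assms(1) xj] by (rule ennreal_leI)
  also have "gfun p n (real (Suc j)) = (\<Sum>k<Suc j. gfun p n (real (Suc k)) - gfun p n (real k))"
    by (subst sum_lessThan_telescope[where f="\<lambda>k. gfun p n (real k)"]) (simp add: gfun_0[OF assms(2)])
  also have "ennreal \<dots> = (\<Sum>k<Suc j. ennreal (gfun p n (real (Suc k)) - gfun p n (real k)))"
    by (rule sum_ennreal[symmetric]) (auto intro: gfun_mono simp: )
  also have "\<dots> = (\<Sum>k<Suc j. ennreal (gfun p n (real (Suc k)) - gfun p n (real k)) * (if real k \<le> x then 1 else 0))"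
    using kj by (intro sum.cong) auto
  also have "\<dots> \<le> (\<Sum>k. ennreal (gfun p n (real (Suc k)) - gfun p n (real k)) * (if real k \<le> x then 1 else 0))"
    by (intro sum_le_suminf) auto
  finally show ?thesis .
qed


lemma c_low: "Suc k \<le> n \<Longrightarrow> gfun p n (real (Suc k)) - gfun p n (real k) = (real k + 1)^(2*p) - real k^(2*p)"
  unfolding gfun_def by (auto simp: add.commute)

lemma c_high: "n \<le> k \<Longrightarrow> gfun p n (real (Suc k)) - gfun p n (real k) = real n^p * ((real k + 1)^p - real k^p)"
proof -
  assume nk: "n \<le> k"
  have e: "real n ^(2*p) = real n^p * real n^p" by (simp add: mult_2 power_add)
  have "real k + 1 > real n" using nk by simp
  then show ?thesis using nk e unfolding gfun_def by (auto simp: right_diff_distrib add.commute)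
qed

lemma sum_bound:
  fixes B r :: real and T :: "nat \<Rightarrow> real"
  assumes p: "p \<ge> 1" and r: "real p < r" "r < 2 * real p" and K: "K \<ge> 1" "K \<le> n" and B: "B \<ge> 0"
    and T0: "\<And>k. 0 \<le> T k" and T1: "\<And>k. T k \<le> 1"
    and TB: "\<And>k. k \<ge> K \<Longrightarrow> T k \<le> B * real k powr (-r)"
  shows "(\<Sum>k<N. (gfun p n (real (Suc k)) - gfun p n (real k)) * T k)
     \<le> real K^(2*p) + B * ((real (2*p) * 2^(2*p-1) * 2 / (2*p - r)) + (real p * 2^(p-1) * 2 powr (r - p + 1) / (r - p))) * real n powr (2*p - r)"
proof -
  define D1 where "D1 = real (2*p) * 2^(2*p-1) * 2 / (2*p - r)"
  define D2 where "D2 = real p * 2^(p-1) * 2 powr (r - p + 1) / (r - p)"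
  define c where "c = 2 * real p - r"
  have D1: "D1 \<ge> 0" using r unfolding D1_def by simp
  have D2: "D2 \<ge> 0" using r unfolding D2_def by simp
  have c0: "c > 0" using r c_def by simp
  define F2 where "F2 = (\<lambda>k::nat. real K^(2*p) + B*D1*(real k powr c - real K powr c))"
  define F3 where "F3 = (\<lambda>k::nat. F2 n + real n^p*B*D2*(real n powr (p-r) - real k powr (p-r)))"
  define \<Phi> where "\<Phi> = (\<lambda>k::nat. if k \<le> K then real k^(2*p) else if k \<le> n then F2 k else F3 k)"
  have E2: "\<Phi> k = F2 k" if "K \<le> k" "k \<le> n" for k
    using that unfolding \<Phi>_def F2_def by auto
  have E3: "\<Phi> k = F3 k" if "n \<le> k" for k
  proof (cases "k = n")
    case True then show ?thesis using E2[of n] K unfolding F3_def by simp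
  next
    case False then show ?thesis using that K unfolding \<Phi>_def by auto
  qed
  have step: "(gfun p n (real (Suc k)) - gfun p n (real k)) * T k \<le> \<Phi> (Suc k) - \<Phi> k" for k
  proof -
    consider "Suc k \<le> K" | "K \<le> k" "Suc k \<le> n" | "n \<le> k" using K by linarith
    then show ?thesis
    proof cases
      case 1
      have cn: "(real k + 1)^(2*p) - real k^(2*p) \<ge> 0" by (intro diff_ge_0_iff_ge[THEN iffD2] power_mono) auto
      have "(gfun p n (real (Suc k)) - gfun p n (real k)) * T k = ((real k + 1)^(2*p) - real k^(2*p)) * T k"
        using 1 K by (subst c_low) auto
      also have "\<dots> \<le> ((real k + 1)^(2*p) - real k^(2*p))" using cn T1[of k] T0[of k]
        by (simp add: mult_left_le)
      also have "\<dots> = \<Phi> (Suc k) - \<Phi> k" using 1 unfolding \<Phi>_def by (simp add: add.commute)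
      finally show ?thesis .
    next
      case 2
      have k1: "real k \<ge> 1" using 2 K by simp
      have cn: "(real k + 1)^(2*p) - real k^(2*p) \<ge> 0" by (intro diff_ge_0_iff_ge[THEN iffD2] power_mono) auto
      have "(gfun p n (real (Suc k)) - gfun p n (real k)) * T k = ((real k + 1)^(2*p) - real k^(2*p)) * T k"
        using 2 by (subst c_low) auto
      also have "\<dots> \<le> ((real k + 1)^(2*p) - real k^(2*p)) * (B * real k powr (-r))"
        using cn TB[of k] 2 by (intro mult_left_mono) auto
      also have "\<dots> = B * (((real k + 1)^(2*p) - real k^(2*p)) * real k powr (-r))" by simp
      also have "\<dots> \<le> B * (D1 * ((real k + 1) powr c - real k powr c))"
        using ineq_head[OF k1 p r(2)] B unfolding D1_def c_def by (intro mult_left_mono) auto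
      also have "\<dots> = F2 (Suc k) - F2 k" unfolding F2_def by (simp add: algebra_simps add.commute)
      also have "\<dots> = \<Phi> (Suc k) - \<Phi> k" using 2 E2[of k] E2[of "Suc k"] by simp
      finally show ?thesis .
    next
      case 3
      have k1: "real k \<ge> 1" using 3 K by simp
      have cn: "(real k + 1)^p - real k^p \<ge> 0" by (intro diff_ge_0_iff_ge[THEN iffD2] power_mono) auto
      have "(gfun p n (real (Suc k)) - gfun p n (real k)) * T k = real n^p * ((real k + 1)^p - real k^p) * T k"
        using 3 by (subst c_high) auto
      also have "\<dots> \<le> real n^p * ((real k + 1)^p - real k^p) * (B * real k powr (-r))"
        using cn TB[of k] 3 K by (intro mult_left_mono) auto
      also have "\<dots> = real n^p * B * (((real k + 1)^p - real k^p) * real k powr (-r))" by simp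
      also have "\<dots> \<le> real n^p * B * (D2 * (real k powr (p - r) - (real k + 1) powr (p - r)))"
        using ineq_tail[OF k1 p r(1)] B unfolding D2_def by (intro mult_left_mono) auto
      also have "\<dots> = F3 (Suc k) - F3 k" unfolding F3_def by (simp add: algebra_simps add.commute)
      also have "\<dots> = \<Phi> (Suc k) - \<Phi> k" using 3 E3[of k] E3[of "Suc k"] by simp
      finally show ?thesis .
    qed
  qed
  have "(\<Sum>k<N. (gfun p n (real (Suc k)) - gfun p n (real k)) * T k) \<le> (\<Sum>k<N. \<Phi> (Suc k) - \<Phi> k)"
    by (intro sum_mono step)
  also have "\<dots> = \<Phi> N - \<Phi> 0" by (rule sum_lessThan_telescope)
  finally have S: "(\<Sum>k<N. (gfun p n (real (Suc k)) - gfun p n (real k)) * T k) \<le> \<Phi> N - \<Phi> 0" .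
  have P0: "\<Phi> 0 = 0" using p unfolding \<Phi>_def by simp
  have PN: "\<Phi> N \<le> real K^(2*p) + B * (D1 + D2) * real n powr c"
  proof -
    have Kc: "real K powr c \<ge> 0" by simp
    have F2n: "F2 n \<le> real K^(2*p) + B*D1*real n powr c"
      unfolding F2_def using B D1 Kc by (simp add: algebra_simps mult_nonneg_nonneg)
    have F2N: "F2 N \<le> F2 n" if "N \<le> n" "K \<le> N"
      unfolding F2_def using B D1 that c0 K
      by (intro add_left_mono mult_left_mono diff_right_mono powr_mono2) auto
    have nc: "real n^p * real n powr (p - r) = real n powr c"
      using K by (simp add: c_def powr_realpow[symmetric] powr_add[symmetric])
    have F3N: "F3 N \<le> F2 n + B * D2 * real n powr c" if "n \<le> N"
    proof -
      have "real n^p*B*D2*(real n powr (p-r) - real N powr (p-r)) \<le> real n^p*B*D2*(real n powr (p-r))"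
        using B D2 by (intro mult_left_mono) auto
      also have "\<dots> = B * D2 * (real n^p * real n powr (p - r))" by simp
      finally show ?thesis unfolding F3_def nc by simp
    qed
    have "real K^(2*p) \<le> real K^(2*p) + B * (D1 + D2) * real n powr c" using B D1 D2 by simp
    consider "N \<le> K" | "K \<le> N" "N \<le> n" | "n \<le> N" using K by linarith
    then show ?thesis
    proof cases
      case 1
      have "real N^(2*p) \<le> real K^(2*p)" using 1 by (intro power_mono) auto
      moreover have "0 \<le> B * (D1 + D2) * real n powr c" using B D1 D2 by simp
      ultimately show ?thesis using 1 unfolding \<Phi>_def by simp
    next
      case 2
      have "0 \<le> B*D2*real n powr c" using B D2 by simp
      moreover have "B * (D1 + D2) * real n powr c = B*D1*real n powr c + B*D2*real n powr c"
        by (simp add: algebra_simps)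
      ultimately show ?thesis using E2[OF 2] F2N[OF 2(2,1)] F2n by linarith
    next
      case 3
      have "B * (D1 + D2) * real n powr c = B*D1*real n powr c + B*D2*real n powr c"
        by (simp add: algebra_simps)
      then show ?thesis using E3[OF 3] F3N[OF 3] F2n by linarith
    qed
  qed
  have eq: "real (2*p) - r = 2 * real p - r" by simp
  have "(\<Sum>k<N. (gfun p n (real (Suc k)) - gfun p n (real k)) * T k) \<le> real K^(2*p) + B * (D1 + D2) * real n powr c"
    using S P0 PN by linarith
  then show ?thesis unfolding D1_def D2_def c_def eq .
qed


definition Dc :: "nat \<Rightarrow> real \<Rightarrow> real" where
  "Dc p r = (real (2*p) * 2^(2*p-1) * 2 / (2*p - r)) + (real p * 2^(p-1) * 2 powr (r - p + 1) / (r - p))"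

lemma Dc_pos: "p \<ge> 1 \<Longrightarrow> real p < r \<Longrightarrow> r < 2 * real p \<Longrightarrow> Dc p r > 0"
  unfolding Dc_def by (intro add_pos_pos divide_pos_pos mult_pos_pos) auto

lemma core:
  fixes M :: "'a measure" and X :: "'a \<Rightarrow> real" and B r :: real
  assumes PS: "prob_space M" and Xm: "X \<in> borel_measurable M" and Xpos: "AE \<omega> in M. X \<omega> > 0"
    and p: "p \<ge> 1" and r: "real p < r" "r < 2 * real p" and K: "K \<ge> 1" "K \<le> n" and B: "B \<ge> 0"
    and TB: "\<And>k. k \<ge> K \<Longrightarrow> measure M {\<omega> \<in> space M. X \<omega> \<ge> real k} \<le> B * real k powr (-r)"
  shows "prob_space.expectation M (\<lambda>\<omega>. X \<omega> ^ (2*p) / (X \<omega> / real n + 1) ^ p)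
     \<le> real K^(2*p) + B * Dc p r * real n powr (2*p - r)"
    (is "_ \<le> ?Bd")
proof -
  interpret prob_space M by (rule PS)
  define A where "A k = {\<omega> \<in> space M. real k \<le> X \<omega>}" for k :: nat
  have Am: "A k \<in> sets M" for k using Xm unfolding A_def by measurable
  define cc where "cc k = gfun p n (real (Suc k)) - gfun p n (real k)" for k :: nat
  have cc0: "cc k \<ge> 0" for k unfolding cc_def using gfun_mono[of "real k" "real (Suc k)"] by simp
  define Y where "Y \<omega> = X \<omega> ^ (2*p) / (X \<omega> / real n + 1) ^ p" for \<omega>
  have Ym: "Y \<in> borel_measurable M" using Xm unfolding Y_def by measurable
  have n1: "n \<ge> 1" using K by simp
  have "AE \<omega> in M. ennreal (Y \<omega>) \<le> (\<Sum>k. ennreal (cc k) * indicator (A k) \<omega>)"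
    using Xpos AE_space
  proof eventually_elim
    case (elim \<omega>)
    have "ennreal (Y \<omega>) \<le> ennreal (gfun p n (X \<omega>))"
      unfolding Y_def using Y_le_gfun[OF elim(1) n1] by (rule ennreal_leI)
    also have "\<dots> \<le> (\<Sum>k. ennreal (cc k) * (if real k \<le> X \<omega> then 1 else 0))"
      unfolding cc_def using gfun_pointwise[of "X \<omega>" p n] elim p by simp
    also have "\<dots> = (\<Sum>k. ennreal (cc k) * indicator (A k) \<omega>)"
      using elim(2) unfolding A_def by (simp add: indicator_def of_bool_def)
    finally show ?case .
  qed
  then have "(\<integral>\<^sup>+\<omega>. ennreal (Y \<omega>) \<partial>M) \<le> (\<integral>\<^sup>+\<omega>. (\<Sum>k. ennreal (cc k) * indicator (A k) \<omega>) \<partial>M)"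
    by (rule nn_integral_mono_AE)
  also have "\<dots> = (\<Sum>k. \<integral>\<^sup>+\<omega>. ennreal (cc k) * indicator (A k) \<omega> \<partial>M)"
    by (rule nn_integral_suminf) (use Am in auto)
  also have "\<dots> = (\<Sum>k. ennreal (cc k * measure M (A k)))"
    using Am cc0 by (simp add: nn_integral_cmult_indicator emeasure_eq_measure ennreal_mult)
  also have "\<dots> \<le> ennreal ?Bd"
  proof (rule suminf_le_const)
    show "summable (\<lambda>k. ennreal (cc k * measure M (A k)))" by simp
    fix N
    have "(\<Sum>k<N. ennreal (cc k * measure M (A k))) = ennreal (\<Sum>k<N. cc k * measure M (A k))"
      using cc0 by (intro sum_ennreal) auto
    also have "\<dots> \<le> ennreal ?Bd" unfolding cc_def Dc_def
      by (intro ennreal_leI sum_bound[OF p r K B]) (auto simp: A_def intro!: TB)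
    finally show "(\<Sum>k<N. ennreal (cc k * measure M (A k))) \<le> ennreal ?Bd" .
  qed
  finally have I: "(\<integral>\<^sup>+\<omega>. ennreal (Y \<omega>) \<partial>M) \<le> ennreal ?Bd" .
  have Y0: "AE \<omega> in M. 0 \<le> Y \<omega>" using Xpos unfolding Y_def by (auto elim!: AE_mp)
  have "expectation Y = enn2real (\<integral>\<^sup>+\<omega>. ennreal (Y \<omega>) \<partial>M)"
    by (rule integral_eq_nn_integral[OF Ym Y0])
  also have "\<dots> \<le> enn2real (ennreal ?Bd)" using I by (rule enn2real_mono) simp
  also have "\<dots> \<le> ?Bd"
  proof -
    have "0 \<le> B * ((real (2*p) * 2^(2*p-1) * 2 / (2*p - r)) + (real p * 2^(p-1) * 2 powr (r - p + 1) / (r - p))) * real n powr (2*p - r)"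
      using B r by (intro mult_nonneg_nonneg add_nonneg_nonneg divide_nonneg_pos) auto
    then have "0 \<le> ?Bd" by (simp add: Dc_def)
    then show ?thesis by simp
  qed
  finally show ?thesis unfolding Y_def .
qed


lemma tail_K:
  fixes T :: "real \<Rightarrow> real"
  assumes "eventually (\<lambda>x. norm (T x) \<le> B * norm (x powr (-r))) at_top"
  shows "\<exists>K::nat. K \<ge> 1 \<and> (\<forall>k. k \<ge> K \<longrightarrow> T (real k) \<le> B * real k powr (-r))"
proof -
  obtain x0 where x0: "\<And>x. x \<ge> x0 \<Longrightarrow> norm (T x) \<le> B * norm (x powr (-r))"
    using assms by (auto simp: eventually_at_top_linorder)
  define K where "K = max 1 (nat \<lceil>x0\<rceil>)"
  have "T (real k) \<le> B * real k powr (-r)" if "k \<ge> K" for k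
  proof -
    have "real k \<ge> x0" using that unfolding K_def by linarith
    then have "norm (T (real k)) \<le> B * norm (real k powr (-r))" by (rule x0)
    then show ?thesis by simp
  qed
  then show ?thesis unfolding K_def by (intro exI[of _ K]) (auto simp: K_def)
qed

lemma E_bound:
  fixes M :: "'a measure" and X :: "'a \<Rightarrow> real" and B r :: real
  assumes PS: "prob_space M" and Xm: "X \<in> borel_measurable M" and Xpos: "AE \<omega> in M. X \<omega> > 0"
    and p: "p \<ge> 1" and r: "real p < r" "r < 2 * real p" and B: "B \<ge> 0"
    and ev: "eventually (\<lambda>x. norm (measure M {\<omega> \<in> space M. X \<omega> \<ge> x}) \<le> B * norm (x powr (-r))) at_top"
  shows "\<exists>K::nat. K \<ge> 1 \<and> (\<forall>n\<ge>K. 0 \<le> prob_space.expectation M (\<lambda>\<omega>. X \<omega> ^ (2*p) / (X \<omega> / real n + 1) ^ p)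
     \<and> prob_space.expectation M (\<lambda>\<omega>. X \<omega> ^ (2*p) / (X \<omega> / real n + 1) ^ p) \<le> real K^(2*p) + B * Dc p r * real n powr (2 * real p - r))"
proof -
  obtain K :: nat where K: "K \<ge> 1" "\<And>k. k \<ge> K \<Longrightarrow> measure M {\<omega> \<in> space M. X \<omega> \<ge> real k} \<le> B * real k powr (-r)"
    using tail_K[OF ev] by blast
  show ?thesis
  proof (intro exI[of _ K] conjI allI impI)
    show "K \<ge> 1" by fact
    fix n assume n: "K \<le> n"
    show "prob_space.expectation M (\<lambda>\<omega>. X \<omega> ^ (2*p) / (X \<omega> / real n + 1) ^ p) \<le> real K^(2*p) + B * Dc p r * real n powr (2 * real p - r)"
      by (rule core[OF PS Xm Xpos p r K(1) n B K(2)])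
    show "0 \<le> prob_space.expectation M (\<lambda>\<omega>. X \<omega> ^ (2*p) / (X \<omega> / real n + 1) ^ p)"
      using Xpos by (intro integral_nonneg_AE) (auto elim!: AE_mp)
  qed
qed


theorem lemma5:
  fixes M :: "'a measure" and X :: "'a \<Rightarrow> real" and p :: nat
  assumes "prob_space M"
    and "X \<in> borel_measurable M"
    and "AE \<omega> in M. X \<omega> > 0"
    and "integrable M X" and "prob_space.expectation M X = 1"
    and "p \<ge> 2"
  shows "((\<lambda>x::real. measure M {\<omega> \<in> space M. X \<omega> \<ge> x}) \<in> o[at_top](\<lambda>x. x powr (- (real p + 1)))
           \<longrightarrow> (\<lambda>n::nat. prob_space.expectation M (\<lambda>\<omega>. X \<omega> ^ (2*p) / (X \<omega> / real n + 1) ^ p))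
                 \<in> o[at_top](\<lambda>n. real n ^ (p - 1)))
       \<and> (\<forall>q::real. real p < q \<and> q < 2 * real p \<and>
           (\<lambda>x::real. measure M {\<omega> \<in> space M. X \<omega> \<ge> x}) \<in> O[at_top](\<lambda>x. x powr (- q))
           \<longrightarrow> (\<lambda>n::nat. prob_space.expectation M (\<lambda>\<omega>. X \<omega> ^ (2*p) / (X \<omega> / real n + 1) ^ p))
                 \<in> O[at_top](\<lambda>n. real n powr (2 * real p - q)))"
proof (intro conjI impI allI)
  have PS: "prob_space M" and Xm: "X \<in> borel_measurable M" and Xpos: "AE \<omega> in M. X \<omega> > 0"
    using assms by auto
  have p1: "p \<ge> 1" using assms(6) by simp
  define En where "En n = prob_space.expectation M (\<lambda>\<omega>. X \<omega> ^ (2*p) / (X \<omega> / real n + 1) ^ p)" for n :: nat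
  {
    assume H: "(\<lambda>x::real. measure M {\<omega> \<in> space M. X \<omega> \<ge> x}) \<in> o[at_top](\<lambda>x. x powr (- (real p + 1)))"
    define r where "r = real p + 1"
    have r1: "real p < r" and r2: "r < 2 * real p" using assms(6) unfolding r_def by auto
    have D: "Dc p r > 0" by (rule Dc_pos[OF p1 r1 r2])
    have "(\<lambda>n. En n) \<in> o[at_top](\<lambda>n. real n ^ (p - 1))"
    proof (rule landau_o.smallI)
      fix c :: real assume c: "c > 0"
      define \<epsilon> where "\<epsilon> = c / (2 * Dc p r)"
      have e0: "\<epsilon> > 0" using c D unfolding \<epsilon>_def by simp
      have ev: "eventually (\<lambda>x. norm (measure M {\<omega> \<in> space M. X \<omega> \<ge> x}) \<le> \<epsilon> * norm (x powr (-r))) at_top"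
        using landau_o.smallD[OF H e0] unfolding r_def by simp
      obtain K :: nat where K: "K \<ge> 1" and KB: "\<And>n. n \<ge> K \<Longrightarrow> 0 \<le> En n \<and> En n \<le> real K^(2*p) + \<epsilon> * Dc p r * real n powr (2 * real p - r)"
        using E_bound[OF PS Xm Xpos p1 r1 r2 _ ev] e0 unfolding En_def by force
      define N where "N = max K (nat \<lceil>2 * real K^(2*p) / c\<rceil>)"
      have "\<forall>n\<ge>N. norm (En n) \<le> c * norm (real n ^ (p - 1))"
      proof (intro allI impI)
        fix n assume n: "N \<le> n"
        have nK: "K \<le> n" using n unfolding N_def by simp
        have n1: "real n \<ge> 1" using nK K by simp
        have eq: "2 * real p - r = real (p - 1)" using p1 unfolding r_def by (simp add: of_nat_diff)
        have pw: "real n powr (2 * real p - r) = real n ^ (p - 1)"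
          unfolding eq using n1 by (simp add: powr_realpow)
        have "real n ^ 1 \<le> real n ^ (p - 1)" using n1 assms(6) by (intro power_increasing) auto
        then have pn: "real n \<le> real n ^ (p - 1)" by (simp only: power_one_right)
        have "2 * real K^(2*p) / c \<le> real n" using n unfolding N_def by linarith
        then have "2 * real K^(2*p) / c \<le> real n ^ (p - 1)" using pn by linarith
        then have k2: "real K^(2*p) \<le> c / 2 * real n ^ (p - 1)" using c by (simp add: field_simps)
        have "\<epsilon> * Dc p r = c / 2" using D unfolding \<epsilon>_def by simp
        then have e: "\<epsilon> * Dc p r * real n powr (2 * real p - r) = c / 2 * real n ^ (p - 1)"
          using pw by simp
        have "En n \<le> real K^(2*p) + c / 2 * real n ^ (p - 1)" using KB[OF nK] e by linarith
        then have "En n \<le> c / 2 * real n ^ (p - 1) + c / 2 * real n ^ (p - 1)" using k2 by linarith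
        moreover have "0 \<le> En n" using KB[OF nK] by simp
        moreover have "0 \<le> real n ^ (p - 1)" by simp
        ultimately show "norm (En n) \<le> c * norm (real n ^ (p - 1))" by simp
      qed
      then show "eventually (\<lambda>n. norm (En n) \<le> c * norm (real n ^ (p - 1))) at_top"
        by (auto simp: eventually_at_top_linorder)
    qed
  }
  then show "(\<lambda>x::real. measure M {\<omega> \<in> space M. X \<omega> \<ge> x}) \<in> o[at_top](\<lambda>x. x powr (- (real p + 1))) \<Longrightarrow>
    (\<lambda>n::nat. prob_space.expectation M (\<lambda>\<omega>. X \<omega> ^ (2*p) / (X \<omega> / real n + 1) ^ p)) \<in> o[at_top](\<lambda>n. real n ^ (p - 1))"
    unfolding En_def by blast
next
  fix q :: real
  assume Q: "real p < q \<and> q < 2 * real p \<and>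
           (\<lambda>x::real. measure M {\<omega> \<in> space M. X \<omega> \<ge> x}) \<in> O[at_top](\<lambda>x. x powr (- q))"
  have PS: "prob_space M" and Xm: "X \<in> borel_measurable M" and Xpos: "AE \<omega> in M. X \<omega> > 0"
    using assms by auto
  have p1: "p \<ge> 1" using assms(6) by simp
  have q1: "real p < q" and q2: "q < 2 * real p" using Q by auto
  obtain C where C: "C > 0" and ev: "eventually (\<lambda>x. norm (measure M {\<omega> \<in> space M. X \<omega> \<ge> x}) \<le> C * norm (x powr (-q))) at_top"
    using Q by (auto elim!: landau_o.bigE)
  define En where "En n = prob_space.expectation M (\<lambda>\<omega>. X \<omega> ^ (2*p) / (X \<omega> / real n + 1) ^ p)" for n :: nat
  obtain K :: nat where K: "K \<ge> 1" and KB: "\<And>n. n \<ge> K \<Longrightarrow> 0 \<le> En n \<and> En n \<le> real K^(2*p) + C * Dc p q * real n powr (2 * real p - q)"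
    using E_bound[OF PS Xm Xpos p1 q1 q2 _ ev] C unfolding En_def by force
  have D: "Dc p q > 0" by (rule Dc_pos[OF p1 q1 q2])
  have "(\<lambda>n. En n) \<in> O[at_top](\<lambda>n. real n powr (2 * real p - q))"
  proof (rule landau_o.bigI)
    show "real K^(2*p) + C * Dc p q > 0" using K C D by (simp add: add_pos_pos)
    have "\<forall>n\<ge>K. norm (En n) \<le> (real K^(2*p) + C * Dc p q) * norm (real n powr (2 * real p - q))"
    proof (intro allI impI)
      fix n assume nK: "K \<le> n"
      have n1: "real n \<ge> 1" using nK K by simp
      have g1: "1 \<le> real n powr (2 * real p - q)" using n1 q2 by (intro ge_one_powr_ge_zero) auto
      have "real K^(2*p) \<le> real K^(2*p) * real n powr (2 * real p - q)"
        using g1 by (simp add: mult_le_cancel_left1)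
      then have "En n \<le> (real K^(2*p) + C * Dc p q) * real n powr (2 * real p - q)"
        using KB[OF nK] by (simp add: distrib_right)
      then show "norm (En n) \<le> (real K^(2*p) + C * Dc p q) * norm (real n powr (2 * real p - q))"
        using KB[OF nK] by simp
    qed
    then show "eventually (\<lambda>n. norm (En n) \<le> (real K^(2*p) + C * Dc p q) * norm (real n powr (2 * real p - q))) at_top"
      by (auto simp: eventually_at_top_linorder)
  qed
  then show "(\<lambda>n::nat. prob_space.expectation M (\<lambda>\<omega>. X \<omega> ^ (2*p) / (X \<omega> / real n + 1) ^ p)) \<in> O[at_top](\<lambda>n. real n powr (2 * real p - q))"
    unfolding En_def by simp
qed

end
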